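(* For a prime $p$, let $I=\{1,2,\dots,\lfloor p/2\rfloor-1\}$, $K=\lceil\log p\rceil$, and let $R\subset I$ be the random set obtained by including each element of $I$ independently with probability $Kp^{-2/3}$. For an integer $n$ let $\mathcal Q(n):=\{(a,b,c,d,e)\in I^5:\ a,b,c\text{ pairwise distinct},\ a+b+c=n,\ c-d-e\in\{0,1\}\}$. Then, for $p$ sufficiently large, $$\mathbb P\big(\exists n\in[p/5,7p/5]\cap\mathbb Z:\ |\mathcal Q(n)\cap R^5|\ge K\big)\ll K^{-1},$$ with an absolute implied constant. *)

theory Defs
  imports "HOL-Probability.Probability" "HOL-Computational_Algebra.Primes"
begin

definition Iset :: "nat \<Rightarrow> int set" where
  "Iset p = {1 .. int (p div 2) - 1}"

definition Kp :: "nat \<Rightarrow> nat" where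
  "Kp p = nat \<lceil>ln (real p)\<rceil>"

definition rand_subset :: "int set \<Rightarrow> real \<Rightarrow> int set pmf" where
  "rand_subset A q = map_pmf (\<lambda>f. {x\<in>A. f x}) (Pi_pmf A False (\<lambda>_. bernoulli_pmf q))"

definition Qset :: "nat \<Rightarrow> int \<Rightarrow> (int \<times> int \<times> int \<times> int \<times> int) set" where
  "Qset p n = {(a,b,c,d,e). a \<in> Iset p \<and> b \<in> Iset p \<and> c \<in> Iset p \<and> d \<in> Iset p \<and> e \<in> Iset p
      \<and> a \<noteq> b \<and> a \<noteq> c \<and> b \<noteq> c \<and> a + b + c = n \<and> c - d - e \<in> {0, 1}}"

definition pow5 :: "int set \<Rightarrow> (int \<times> int \<times> int \<times> int \<times> int) set" where
  "pow5 R = {(a,b,c,d,e). a \<in> R \<and> b \<in> R \<and> c \<in> R \<and> d \<in> R \<and> e \<in> R}"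

end

theory Submission
  imports Defs "HOL-Real_Asymp.Real_Asymp"
begin


lemma avoid:
  fixes V F :: "'a set"
  assumes "finite F" "card F < card V"
  shows "\<exists>v\<in>V. v \<notin> F"
proof (rule ccontr)
  assume "\<not> ?thesis" hence "V \<subseteq> F" by auto
  hence "card V \<le> card F" using assms(1) by (rule card_mono[rotated])
  thus False using assms by simp
qed

lemma avoid_list:
  assumes "length xs < card V"
  shows "\<exists>v\<in>V. v \<notin> set xs"
  using avoid[of "set xs" V] card_length[of xs] assms by auto

definition L1 :: "int \<times> int \<times> int \<times> int \<times> int \<Rightarrow> int list" where
  "L1 t = (case t of (v1,u,v2,v3,v4) \<Rightarrow> [v1, u, v2, v1+u-v2, v3, v1+u-v3, v4, v1+u-v4])"

definition L2 :: "int \<times> int \<times> int \<times> int \<times> int \<Rightarrow> int list" where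
  "L2 t = (case t of (v1,u,v2,v3,v4) \<Rightarrow> [v1, u, v2, v2-(v1-u), v3, v3-(v1-u), v4, v4-(v1-u)])"

definition B1 :: "int set \<Rightarrow> int set \<Rightarrow> bool" where
  "B1 I R = (\<exists>t \<in> I \<times> I \<times> I \<times> I \<times> I. distinct (L1 t) \<and> set (L1 t) \<subseteq> I \<and> set (L1 t) \<subseteq> R)"

definition B2 :: "int set \<Rightarrow> int set \<Rightarrow> bool" where
  "B2 I R = (\<exists>t \<in> I \<times> I \<times> I \<times> I \<times> I. distinct (L2 t) \<and> set (L2 t) \<subseteq> I \<and> set (L2 t) \<subseteq> R)"

lemma sum_bound:
  assumes "\<not> B1 I R" "R \<subseteq> I"
  shows "card {v\<in>R. m - v \<in> R} \<le> 7"
proof (rule ccontr)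
  let ?V = "{v\<in>R. m - v \<in> R}"
  assume "\<not> ?thesis"
  hence c: "card ?V \<ge> 8" by simp
  obtain v1 where v1: "v1 \<in> ?V" "v1 \<notin> set [m div 2]"
    using avoid_list[of "[m div 2]" ?V] c by auto
  obtain v2 where v2: "v2 \<in> ?V" "v2 \<notin> set [m div 2, v1, m - v1]"
    using avoid_list[of "[m div 2, v1, m - v1]" ?V] c by auto
  obtain v3 where v3: "v3 \<in> ?V" "v3 \<notin> set [m div 2, v1, m - v1, v2, m - v2]"
    using avoid_list[of "[m div 2, v1, m - v1, v2, m - v2]" ?V] c by auto
  obtain v4 where v4: "v4 \<in> ?V" "v4 \<notin> set [m div 2, v1, m - v1, v2, m - v2, v3, m - v3]"
    using avoid_list[of "[m div 2, v1, m - v1, v2, m - v2, v3, m - v3]" ?V] c by auto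
  have h: "2 * v \<noteq> m" if "v \<noteq> m div 2" for v using that by auto
  have "L1 (v1, m - v1, v2, v3, v4) = [v1, m - v1, v2, m - v2, v3, m - v3, v4, m - v4]"
    by (simp add: L1_def)
  moreover have "distinct [v1, m - v1, v2, m - v2, v3, m - v3, v4, m - v4]"
    using v1 v2 v3 v4 h[of v1] h[of v2] h[of v3] h[of v4] by auto
  moreover have "set [v1, m - v1, v2, m - v2, v3, m - v3, v4, m - v4] \<subseteq> R"
    using v1 v2 v3 v4 by auto
  moreover have "(v1, m - v1, v2, v3, v4) \<in> I \<times> I \<times> I \<times> I \<times> I"
    using v1 v2 v3 v4 assms(2) by auto
  ultimately show False using assms(1,2) unfolding B1_def
    by (metis order_trans)
qed

lemma diff_bound:
  assumes "\<not> B2 I R" "R \<subseteq> I" "x \<noteq> 0"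
  shows "card {v\<in>R. v - x \<in> R} \<le> 9"
proof (rule ccontr)
  let ?V = "{v\<in>R. v - x \<in> R}"
  assume "\<not> ?thesis"
  hence c: "card ?V \<ge> 10" by simp
  obtain v1 where v1: "v1 \<in> ?V"
    using avoid_list[of "[]" ?V] c by auto
  obtain v2 where v2: "v2 \<in> ?V" "v2 \<notin> set [v1, v1 - x, v1 + x]"
    using avoid_list[of "[v1, v1 - x, v1 + x]" ?V] c by auto
  obtain v3 where v3: "v3 \<in> ?V" "v3 \<notin> set [v1, v1 - x, v1 + x, v2, v2 - x, v2 + x]"
    using avoid_list[of "[v1, v1 - x, v1 + x, v2, v2 - x, v2 + x]" ?V] c by auto
  obtain v4 where v4: "v4 \<in> ?V" "v4 \<notin> set [v1, v1 - x, v1 + x, v2, v2 - x, v2 + x, v3, v3 - x, v3 + x]"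
    using avoid_list[of "[v1, v1 - x, v1 + x, v2, v2 - x, v2 + x, v3, v3 - x, v3 + x]" ?V] c by auto
  have "L2 (v1, v1 - x, v2, v3, v4) = [v1, v1 - x, v2, v2 - x, v3, v3 - x, v4, v4 - x]"
    by (simp add: L2_def)
  moreover have "distinct [v1, v1 - x, v2, v2 - x, v3, v3 - x, v4, v4 - x]"
    using v1 v2 v3 v4 assms(3) by auto
  moreover have "set [v1, v1 - x, v2, v2 - x, v3, v3 - x, v4, v4 - x] \<subseteq> R"
    using v1 v2 v3 v4 by auto
  moreover have "(v1, v1 - x, v2, v3, v4) \<in> I \<times> I \<times> I \<times> I \<times> I"
    using v1 v2 v3 v4 assms(2) by auto
  ultimately show False using assms(1,2) unfolding B2_def
    by (metis order_trans)
qed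




definition tlist :: "int\<times>int\<times>int\<times>int\<times>int \<Rightarrow> int list" where
  "tlist w = (case w of (a,b,c,d,e) \<Rightarrow> [a,b,c,d,e])"
definition tset :: "int\<times>int\<times>int\<times>int\<times>int \<Rightarrow> int set" where
  "tset w = set (tlist w)"
definition thd :: "int\<times>int\<times>int\<times>int\<times>int \<Rightarrow> int" where
  "thd w = (case w of (a,b,c,d,e) \<Rightarrow> c)"

lemma card_tset: "card (tset w) \<le> 5"
  unfolding tset_def using card_length[of "tlist w"] by (simp add: tlist_def split: prod.splits)

lemma tset_simp[simp]: "tset (a,b,c,d,e) = {a,b,c,d,e}"
  by (simp add: tset_def tlist_def)
lemma thd_simp[simp]: "thd (a,b,c,d,e) = c"
  by (simp add: thd_def)

lemma pow5_iff: "w \<in> pow5 R \<longleftrightarrow> tset w \<subseteq> R"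
  by (cases w) (auto simp: pow5_def)

lemma fiber_bound:
  assumes "\<not> B1 I R" "R \<subseteq> I" "finite R"
  shows "card {w \<in> Qset p n \<inter> pow5 R. thd w = c} \<le> 98"
proof -
  define Sa where "Sa = {a\<in>R. (n-c)-a\<in>R}"
  define Sd where "Sd = {d\<in>R. c - d \<in> R} \<times> {0::int} \<union> {d\<in>R. (c-1) - d \<in> R} \<times> {1}"
  define g where "g = (\<lambda>(a::int,d::int,\<delta>::int). (a, n - c - a, c, d, c - \<delta> - d))"
  have fa: "card Sa \<le> 7" unfolding Sa_def by (rule sum_bound[OF assms(1,2)])
  have "card Sd \<le> card ({d\<in>R. c - d \<in> R} \<times> {0::int}) + card ({d\<in>R. (c-1) - d \<in> R} \<times> {1::int})"
    unfolding Sd_def by (rule card_Un_le)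
  also have "\<dots> \<le> 7 + 7"
    using sum_bound[OF assms(1,2), of c] sum_bound[OF assms(1,2), of "c-1"]
    by (simp add: card_cartesian_product)
  finally have fd: "card Sd \<le> 14" by simp
  have sub: "{w \<in> Qset p n \<inter> pow5 R. thd w = c} \<subseteq> g ` (Sa \<times> Sd)"
  proof
    fix w assume w: "w \<in> {w \<in> Qset p n \<inter> pow5 R. thd w = c}"
    obtain a b c' d e where we: "w = (a,b,c',d,e)" by (cases w) auto
    from w we have h: "c' = c" "a + b + c = n" "c - d - e \<in> {0,1}" "a \<in> R" "b \<in> R" "c \<in> R" "d \<in> R" "e \<in> R"
      by (auto simp: Qset_def pow5_def)
    have ee: "(c - d - e = 0 \<and> c - d = e) \<or> (c - d - e = 1 \<and> c - 1 - d = e)" using h by auto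
    have "n - c - a = b" using h by simp
    hence "(a, d, c - d - e) \<in> Sa \<times> Sd" using h ee unfolding Sa_def Sd_def by auto
    moreover have "w = g (a, d, c - d - e)" using h we by (simp add: g_def)
    ultimately show "w \<in> g ` (Sa \<times> Sd)" by blast
  qed
  have "finite Sa" "finite Sd" using assms(3) by (auto simp: Sa_def Sd_def)
  hence "card {w \<in> Qset p n \<inter> pow5 R. thd w = c} \<le> card (g ` (Sa \<times> Sd))"
    by (intro card_mono[OF _ sub]) auto
  also have "\<dots> \<le> card (Sa \<times> Sd)" by (rule card_image_le) (use \<open>finite Sa\<close> \<open>finite Sd\<close> in auto)
  also have "\<dots> = card Sa * card Sd" by (rule card_cartesian_product)
  also have "\<dots> \<le> 7 * 14" using fa fd by (intro mult_mono) auto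
  finally show ?thesis by simp
qed

lemma fiber_bound2:
  assumes "\<not> B1 I R" "R \<subseteq> I" "finite R" "finite C"
  shows "card {w \<in> Qset p n \<inter> pow5 R. thd w \<in> C} \<le> 98 * card C"
proof -
  have "{w \<in> Qset p n \<inter> pow5 R. thd w \<in> C} = (\<Union>c\<in>C. {w \<in> Qset p n \<inter> pow5 R. thd w = c})"
    by auto
  hence "card {w \<in> Qset p n \<inter> pow5 R. thd w \<in> C} \<le> (\<Sum>c\<in>C. card {w \<in> Qset p n \<inter> pow5 R. thd w = c})"
    using card_UN_le[OF assms(4)] by simp
  also have "\<dots> \<le> (\<Sum>c\<in>C. 98)" by (intro sum_mono fiber_bound[OF assms(1-3)])
  finally show ?thesis by simp
qed

definition Deg :: "int \<Rightarrow> int set \<Rightarrow> int \<Rightarrow> int set" where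
  "Deg n R x = {x} \<union> {c\<in>R. (n-x)-c \<in> R} \<union> {c\<in>R. c - x \<in> R} \<union> {c\<in>R. c - (x+1) \<in> R}"

lemma deg_mem:
  assumes "w \<in> Qset p n \<inter> pow5 R" "x \<in> tset w"
  shows "thd w \<in> Deg n R x"
proof -
  obtain a b c d e where we: "w = (a,b,c,d,e)" by (cases w) auto
  from assms we have h: "a + b + c = n" "c - d - e \<in> {0,1}" "a \<in> R" "b \<in> R" "c \<in> R" "d \<in> R" "e \<in> R"
      "x \<in> {a,b,c,d,e}"
      by (auto simp: Qset_def pow5_def)
  show ?thesis using h unfolding we Deg_def
    by (auto simp: algebra_simps)
qed

lemma deg_card:
  assumes "\<not> B1 I R" "\<not> B2 I R" "R \<subseteq> I" "x \<ge> 1"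
  shows "card (Deg n R x) \<le> 26"
proof -
  have "card (Deg n R x) \<le> card ({x} \<union> {c\<in>R. (n-x)-c \<in> R} \<union> {c\<in>R. c - x \<in> R}) + card {c\<in>R. c - (x+1) \<in> R}"
    unfolding Deg_def by (rule card_Un_le)
  also have "\<dots> \<le> card ({x} \<union> {c\<in>R. (n-x)-c \<in> R}) + card {c\<in>R. c - x \<in> R} + card {c\<in>R. c - (x+1) \<in> R}"
    by (rule add_right_mono, rule card_Un_le)
  also have "\<dots> \<le> card {x} + card {c\<in>R. (n-x)-c \<in> R} + card {c\<in>R. c - x \<in> R} + card {c\<in>R. c - (x+1) \<in> R}"
    by (intro add_right_mono, rule card_Un_le)
  also have "\<dots> \<le> 1 + 7 + 9 + 9"
    using sum_bound[OF assms(1,3)] diff_bound[OF assms(2,3)] assms(4)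
    by (intro add_mono) auto
  finally show ?thesis by simp
qed




lemma pick:
  assumes "\<not> B1 I R" "\<not> B2 I R" "R \<subseteq> I" "finite R" "finite P" "P \<subseteq> {1..}" "card P \<le> 15"
    and W: "card (Qset p n \<inter> pow5 R) > 38220"
  shows "\<exists>w \<in> Qset p n \<inter> pow5 R. tset w \<inter> P = {}"
proof -
  define U where "U = (\<Union>x\<in>P. Deg n R x)"
  have "card U \<le> (\<Sum>x\<in>P. card (Deg n R x))" unfolding U_def by (rule card_UN_le[OF assms(5)])
  also have "\<dots> \<le> (\<Sum>x\<in>P. 26)" using assms(6) by (intro sum_mono deg_card[OF assms(1,2,3)]) auto
  also have "\<dots> \<le> 390" using assms(7) by simp
  finally have cU: "card U \<le> 390" .
  have fD: "finite (Deg n R x)" for x unfolding Deg_def using assms(4) by simp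
  have fU: "finite U" unfolding U_def using assms(5) fD by blast
  have "card {w \<in> Qset p n \<inter> pow5 R. thd w \<in> U} \<le> 98 * card U"
    by (rule fiber_bound2[OF assms(1,3,4) fU])
  also have "\<dots> < card (Qset p n \<inter> pow5 R)" using cU W by linarith
  finally have lt: "card {w \<in> Qset p n \<inter> pow5 R. thd w \<in> U} < card (Qset p n \<inter> pow5 R)" .
  have fin: "finite (Qset p n \<inter> pow5 R)"
  proof (rule ccontr)
    assume "\<not> finite (Qset p n \<inter> pow5 R)"
    hence "card (Qset p n \<inter> pow5 R) = 0" by simp
    thus False using W by simp
  qed
  have "finite {w \<in> Qset p n \<inter> pow5 R. thd w \<in> U}" by (rule finite_subset[OF _ fin]) auto
  then obtain w where w: "w \<in> Qset p n \<inter> pow5 R" "w \<notin> {w \<in> Qset p n \<inter> pow5 R. thd w \<in> U}"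
    using avoid[OF _ lt] by blast
  have "tset w \<inter> P = {}"
  proof (rule ccontr)
    assume "tset w \<inter> P \<noteq> {}"
    then obtain x where "x \<in> tset w" "x \<in> P" by auto
    hence "thd w \<in> Deg n R x" "x \<in> P" using deg_mem[OF w(1)] by auto
    hence "thd w \<in> U" unfolding U_def by blast
    thus False using w by auto
  qed
  thus ?thesis using w by auto
qed

definition B3 :: "nat \<Rightarrow> int set \<Rightarrow> bool" where
  "B3 p R = (\<exists>n \<in> {0..3 * int p}. \<exists>w1 w2 w3 w4. w1 \<in> Qset p n \<and> w2 \<in> Qset p n \<and> w3 \<in> Qset p n \<and> w4 \<in> Qset p n
     \<and> tset w1 \<inter> tset w2 = {} \<and> tset w1 \<inter> tset w3 = {} \<and> tset w1 \<inter> tset w4 = {}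
     \<and> tset w2 \<inter> tset w3 = {} \<and> tset w2 \<inter> tset w4 = {} \<and> tset w3 \<inter> tset w4 = {}
     \<and> tset w1 \<union> tset w2 \<union> tset w3 \<union> tset w4 \<subseteq> R)"

lemma tset_Q: "w \<in> Qset p n \<Longrightarrow> tset w \<subseteq> Iset p"
  by (cases w) (auto simp: Qset_def)

lemma Q_n: "w \<in> Qset p n \<Longrightarrow> n \<in> {0..3 * int p}"
  by (cases w) (auto simp: Qset_def Iset_def)

lemma Iset_pos: "Iset p \<subseteq> {1..}" by (auto simp: Iset_def)

lemma det_main:
  assumes "\<not> B1 (Iset p) R" "\<not> B2 (Iset p) R" "\<not> B3 p R" "R \<subseteq> Iset p" "finite R"
  shows "card (Qset p n \<inter> pow5 R) \<le> 38220"
proof (rule ccontr)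
  assume "\<not> ?thesis"
  hence W: "card (Qset p n \<inter> pow5 R) > 38220" by simp
  note pk = pick[OF assms(1,2,4,5) _ _ _ W]
  obtain w1 where w1: "w1 \<in> Qset p n \<inter> pow5 R" using pk[of "{}"] by auto
  have t1: "tset w1 \<subseteq> {1..}" "finite (tset w1)" "card (tset w1) \<le> 5"
    using tset_Q[of w1 p n] w1 Iset_pos[of p] card_tset[of w1] by (auto simp: tset_def[of w1])
  obtain w2 where w2: "w2 \<in> Qset p n \<inter> pow5 R" "tset w2 \<inter> tset w1 = {}"
    using pk[of "tset w1"] t1 by auto
  have t2: "tset w2 \<subseteq> {1..}" "finite (tset w2)" "card (tset w2) \<le> 5"
    using tset_Q[of w2 p n] w2 Iset_pos[of p] card_tset[of w2] by (auto simp: tset_def[of w2])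
  have c12: "card (tset w1 \<union> tset w2) \<le> 10" using card_Un_le[of "tset w1" "tset w2"] t1 t2 by linarith
  obtain w3 where w3: "w3 \<in> Qset p n \<inter> pow5 R" "tset w3 \<inter> (tset w1 \<union> tset w2) = {}"
    using pk[of "tset w1 \<union> tset w2"] t1 t2 c12 by auto
  have t3: "tset w3 \<subseteq> {1..}" "finite (tset w3)" "card (tset w3) \<le> 5"
    using tset_Q[of w3 p n] w3 Iset_pos[of p] card_tset[of w3] by (auto simp: tset_def[of w3])
  have c123: "card (tset w1 \<union> tset w2 \<union> tset w3) \<le> 15"
    using card_Un_le[of "tset w1 \<union> tset w2" "tset w3"] c12 t3 by linarith
  obtain w4 where w4: "w4 \<in> Qset p n \<inter> pow5 R" "tset w4 \<inter> (tset w1 \<union> tset w2 \<union> tset w3) = {}"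
    using pk[of "tset w1 \<union> tset w2 \<union> tset w3"] t1 t2 t3 c123 by auto
  have "B3 p R" unfolding B3_def
    apply (rule bexI[where x=n])
     apply (rule exI[where x=w1], rule exI[where x=w2], rule exI[where x=w3], rule exI[where x=w4])
    using w1 w2 w3 w4 Q_n[of w1 p n] by (auto simp: pow5_iff)
  thus False using assms(3) by simp
qed




lemma finite_Iset2: "finite (Iset p)" by (simp add: Iset_def)

lemma Q_props:
  assumes "(a,b,c,d,e) \<in> Qset p n"
  shows "a \<in> Iset p" "b \<in> Iset p" "c \<in> Iset p" "d \<in> Iset p" "e \<in> Iset p"
    "a \<noteq> b" "a \<noteq> c" "b \<noteq> c" "a + b + c = n" "c - d - e \<in> {0,1}" "d \<noteq> c" "e \<noteq> c"
  using assms by (auto simp: Qset_def Iset_def)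

lemma finite_Q: "finite (Qset p n)"
proof -
  have "Qset p n \<subseteq> Iset p \<times> Iset p \<times> Iset p \<times> Iset p \<times> Iset p" by (auto simp: Qset_def)
  thus ?thesis by (rule finite_subset) (simp add: finite_Iset2)
qed

lemma card_Q: "card (Qset p n) \<le> 2 * card (Iset p) ^ 3"
proof -
  let ?I = "Iset p"
  define h where "h = (\<lambda>(a::int,b::int,c::int,d::int,e::int). (a,b,d,c-d-e))"
  have inj: "inj_on h (Qset p n)"
  proof (rule inj_onI)
    fix w w' assume w: "w \<in> Qset p n" "w' \<in> Qset p n" "h w = h w'"
    obtain a b c d e where we: "w = (a,b,c,d,e)" by (cases w) auto
    obtain a' b' c' d' e' where we': "w' = (a',b',c',d',e')" by (cases w') auto
    show "w = w'" using w Q_props(9)[of a b c d e p n] Q_props(9)[of a' b' c' d' e' p n]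
      unfolding we we' h_def by auto
  qed
  have "h ` Qset p n \<subseteq> ?I \<times> ?I \<times> ?I \<times> {0,1}"
    by (auto simp: h_def Qset_def)
  hence "card (h ` Qset p n) \<le> card (?I \<times> ?I \<times> ?I \<times> {0::int,1})"
    by (intro card_mono) (auto simp: finite_Iset2)
  hence "card (Qset p n) \<le> card (?I \<times> ?I \<times> ?I \<times> {0::int,1})" using card_image[OF inj] by simp
  also have "\<dots> = 2 * card ?I ^ 3" by (simp add: card_cartesian_product power3_eq_cube)
  finally show ?thesis .
qed

lemma coinc4:
  assumes "(a,b,c,d,e) \<in> Qset p n" "card {a,b,c,d,e} \<le> 4"
  shows "d = a \<or> d = b \<or> d = e \<or> e = a \<or> e = b"
proof (rule ccontr)
  assume "\<not> ?thesis"
  hence "distinct [a,b,c,d,e]" using Q_props[OF assms(1)] by auto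
  hence "card {a,b,c,d,e} = 5" using distinct_card[of "[a,b,c,d,e]"] by simp
  thus False using assms(2) by simp
qed

lemma card_Q4: "card {w \<in> Qset p n. card (tset w) \<le> 4} \<le> 10 * card (Iset p) ^ 2"
proof -
  let ?I = "Iset p"
  define tg where "tg = (\<lambda>(a::int,b::int,c::int,d::int,e::int).
      if d = a then 0 else if d = b then 1 else if d = e then 2 else if e = a then 3 else (4::int))"
  define h where "h = (\<lambda>w. case w of (a::int,b::int,c::int,d::int,e::int) \<Rightarrow> (a,b,c-d-e, tg w))"
  have inj: "inj_on h {w \<in> Qset p n. card (tset w) \<le> 4}"
  proof (rule inj_onI)
    fix w w' assume w: "w \<in> {w \<in> Qset p n. card (tset w) \<le> 4}" "w' \<in> {w \<in> Qset p n. card (tset w) \<le> 4}" "h w = h w'"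
    obtain a b c d e where we: "w = (a,b,c,d,e)" by (cases w) auto
    obtain a' b' c' d' e' where we': "w' = (a',b',c',d',e')" by (cases w') auto
    have c1: "d = a \<or> d = b \<or> d = e \<or> e = a \<or> e = b" using coinc4[of a b c d e p n] w(1) we by auto
    have c2: "d' = a' \<or> d' = b' \<or> d' = e' \<or> e' = a' \<or> e' = b'" using coinc4[of a' b' c' d' e' p n] w(2) we' by auto
    have s1: "a + b + c = n" using Q_props(9)[of a b c d e p n] w(1) we by auto
    have s2: "a' + b' + c' = n" using Q_props(9)[of a' b' c' d' e' p n] w(2) we' by auto
    have eq: "a = a'" "b = b'" "c - d - e = c' - d' - e'" "tg (a,b,c,d,e) = tg (a',b',c',d',e')"
      using w(3) unfolding we we' h_def by auto
    have "c = c'" using eq s1 s2 by simp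
    with eq c1 c2 show "w = w'" unfolding we we' tg_def
      by (auto split: if_splits)
  qed
  have "h ` {w \<in> Qset p n. card (tset w) \<le> 4} \<subseteq> ?I \<times> ?I \<times> {0,1} \<times> {0..4}"
    by (auto simp: h_def tg_def Qset_def)
  hence "card (h ` {w \<in> Qset p n. card (tset w) \<le> 4}) \<le> card (?I \<times> ?I \<times> {0::int,1} \<times> {0::int..4})"
    by (intro card_mono) (auto simp: finite_Iset2)
  hence "card {w \<in> Qset p n. card (tset w) \<le> 4} \<le> card (?I \<times> ?I \<times> {0::int,1} \<times> {0::int..4})"
    using card_image[OF inj] by simp
  also have "\<dots> = 10 * card ?I ^ 2" by (simp add: card_cartesian_product power2_eq_square)
  finally show ?thesis .
qed

lemma coinc3:
  assumes "(a,b,c,d,e) \<in> Qset p n" "card {a,b,c,d,e} \<le> 3"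
  shows "(d = a \<or> d = b) \<and> (e = a \<or> e = b)"
proof -
  have "card {a,b,c} = 3" using Q_props[OF assms(1)] by auto
  moreover have "{a,b,c} \<subseteq> {a,b,c,d,e}" by auto
  moreover have "card {a,b,c} \<le> card {a,b,c,d,e}" by (rule card_mono) auto
  ultimately have "{a,b,c} = {a,b,c,d,e}"
    using assms(2) by (intro card_subset_eq) auto
  hence "d \<in> {a,b,c}" "e \<in> {a,b,c}" by auto
  thus ?thesis using Q_props[OF assms(1)] by auto
qed

lemma card_Q3: "card {w \<in> Qset p n. card (tset w) \<le> 3} \<le> 8 * card (Iset p)"
proof -
  let ?I = "Iset p"
  define tg where "tg = (\<lambda>(a::int,b::int,c::int,d::int,e::int).
      if d = a \<and> e = a then 0 else if d = a then 1 else if e = a then 2 else (3::int))"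
  define h where "h = (\<lambda>w. case w of (a::int,b::int,c::int,d::int,e::int) \<Rightarrow> (a,c-d-e, tg w))"
  have inj: "inj_on h {w \<in> Qset p n. card (tset w) \<le> 3}"
  proof (rule inj_onI)
    fix w w' assume w: "w \<in> {w \<in> Qset p n. card (tset w) \<le> 3}" "w' \<in> {w \<in> Qset p n. card (tset w) \<le> 3}" "h w = h w'"
    obtain a b c d e where we: "w = (a,b,c,d,e)" by (cases w) auto
    obtain a' b' c' d' e' where we': "w' = (a',b',c',d',e')" by (cases w') auto
    have c1: "(d = a \<or> d = b) \<and> (e = a \<or> e = b)" using coinc3[of a b c d e p n] w(1) we by auto
    have c2: "(d' = a' \<or> d' = b') \<and> (e' = a' \<or> e' = b')" using coinc3[of a' b' c' d' e' p n] w(2) we' by auto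
    have s1: "a + b + c = n" using Q_props(9)[of a b c d e p n] w(1) we by auto
    have s2: "a' + b' + c' = n" using Q_props(9)[of a' b' c' d' e' p n] w(2) we' by auto
    have ab: "a \<noteq> b" "a' \<noteq> b'" using Q_props(6)[of a b c d e p n] Q_props(6)[of a' b' c' d' e' p n] w(1,2) unfolding we we' by auto
    have eq: "a = a'" "c - d - e = c' - d' - e'" "tg (a,b,c,d,e) = tg (a',b',c',d',e')"
      using w(3) unfolding we we' h_def by auto
    show "w = w'" using eq c1 c2 s1 s2 ab unfolding we we' tg_def
      by (auto split: if_splits)
  qed
  have "h ` {w \<in> Qset p n. card (tset w) \<le> 3} \<subseteq> ?I \<times> {0,1} \<times> {0..3}"
    by (auto simp: h_def tg_def Qset_def)
  hence "card (h ` {w \<in> Qset p n. card (tset w) \<le> 3}) \<le> card (?I \<times> {0::int,1} \<times> {0::int..3})"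
    by (intro card_mono) (auto simp: finite_Iset2)
  hence "card {w \<in> Qset p n. card (tset w) \<le> 3} \<le> card (?I \<times> {0::int,1} \<times> {0::int..3})"
    using card_image[OF inj] by simp
  also have "\<dots> = 8 * card ?I" by (simp add: card_cartesian_product)
  finally show ?thesis .
qed




lemma prob_subset:
  assumes A: "finite A" and S: "S \<subseteq> A" and q: "0 \<le> q" "q \<le> 1"
  shows "measure_pmf.prob (rand_subset A q) {R. S \<subseteq> R} = q ^ card S"
proof -
  have "measure_pmf.prob (rand_subset A q) {R. S \<subseteq> R}
     = measure_pmf.prob (Pi_pmf A False (\<lambda>_. bernoulli_pmf q)) (Pi A (\<lambda>x. if x \<in> S then {True} else UNIV))"
    unfolding rand_subset_def measure_map_pmf
    apply (rule arg_cong[where f="measure_pmf.prob _"])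
    using S by (auto simp: Pi_def)
  also have "\<dots> = (\<Prod>x\<in>A. measure_pmf.prob (bernoulli_pmf q) (if x \<in> S then {True} else UNIV))"
    using A by (rule measure_Pi_pmf_Pi)
  also have "\<dots> = (\<Prod>x\<in>A. if x \<in> S then q else 1)"
    using q by (intro prod.cong) (auto simp: measure_pmf_single)
  also have "\<dots> = q ^ card S"
    using A S by (simp add: prod.If_cases Int_absorb1)
  finally show ?thesis .
qed

lemma union_bound:
  assumes A: "finite A" and T: "finite T" and S: "\<And>t. t \<in> T \<Longrightarrow> S t \<subseteq> A" and q: "0 \<le> q" "q \<le> 1"
  shows "measure_pmf.prob (rand_subset A q) {R. \<exists>t\<in>T. S t \<subseteq> R} \<le> (\<Sum>t\<in>T. q ^ card (S t))"
proof -
  have "{R. \<exists>t\<in>T. S t \<subseteq> R} = (\<Union>t\<in>T. {R. S t \<subseteq> R})" by auto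
  hence "measure_pmf.prob (rand_subset A q) {R. \<exists>t\<in>T. S t \<subseteq> R}
      \<le> (\<Sum>t\<in>T. measure_pmf.prob (rand_subset A q) {R. S t \<subseteq> R})"
    using measure_pmf.finite_measure_subadditive_finite[OF T, of "\<lambda>t. {R. S t \<subseteq> R}"] by simp
  also have "\<dots> = (\<Sum>t\<in>T. q ^ card (S t))"
    by (intro sum.cong refl prob_subset[OF A S q])
  finally show ?thesis .
qed

lemma set_rand_subset: "finite A \<Longrightarrow> R \<in> set_pmf (rand_subset A q) \<Longrightarrow> R \<subseteq> A"
  unfolding rand_subset_def by auto

lemma finite_Iset: "finite (Iset p)" by (simp add: Iset_def)

lemma probB1:
  assumes q: "0 \<le> q" "q \<le> 1"
  shows "measure_pmf.prob (rand_subset (Iset p) q) {R. B1 (Iset p) R} \<le> real (card (Iset p)) ^ 5 * q ^ 8"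
proof -
  let ?I = "Iset p"
  define T where "T = {t \<in> ?I \<times> ?I \<times> ?I \<times> ?I \<times> ?I. distinct (L1 t) \<and> set (L1 t) \<subseteq> ?I}"
  have fT: "finite T" unfolding T_def using finite_Iset by auto
  have ev: "{R. B1 ?I R} = {R. \<exists>t\<in>T. set (L1 t) \<subseteq> R}" unfolding B1_def T_def by blast
  have "measure_pmf.prob (rand_subset ?I q) {R. \<exists>t\<in>T. set (L1 t) \<subseteq> R} \<le> (\<Sum>t\<in>T. q ^ card (set (L1 t)))"
    by (rule union_bound[OF finite_Iset fT _ q]) (simp add: T_def)
  hence "measure_pmf.prob (rand_subset ?I q) {R. B1 ?I R} \<le> (\<Sum>t\<in>T. q ^ card (set (L1 t)))"
    by (simp only: ev)
  also have "\<dots> = (\<Sum>t\<in>T. q ^ 8)"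
  proof (intro sum.cong refl)
    fix t assume "t \<in> T"
    hence "distinct (L1 t)" by (simp add: T_def)
    moreover have "length (L1 t) = 8" by (cases t) (simp add: L1_def)
    ultimately show "q ^ card (set (L1 t)) = q ^ 8" by (simp add: distinct_card)
  qed
  also have "\<dots> = real (card T) * q ^ 8" by simp
  also have "\<dots> \<le> real (card (?I \<times> ?I \<times> ?I \<times> ?I \<times> ?I)) * q ^ 8"
  proof (rule mult_right_mono)
    have "card T \<le> card (?I \<times> ?I \<times> ?I \<times> ?I \<times> ?I)"
      by (rule card_mono) (auto simp: T_def finite_Iset)
    thus "real (card T) \<le> real (card (?I \<times> ?I \<times> ?I \<times> ?I \<times> ?I))" by linarith
  qed (use q in simp)
  also have "\<dots> = real (card (Iset p)) ^ 5 * q ^ 8" by (simp add: card_cartesian_product eval_nat_numeral mult.assoc)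
  finally show ?thesis .
qed

lemma probB2:
  assumes q: "0 \<le> q" "q \<le> 1"
  shows "measure_pmf.prob (rand_subset (Iset p) q) {R. B2 (Iset p) R} \<le> real (card (Iset p)) ^ 5 * q ^ 8"
proof -
  let ?I = "Iset p"
  define T where "T = {t \<in> ?I \<times> ?I \<times> ?I \<times> ?I \<times> ?I. distinct (L2 t) \<and> set (L2 t) \<subseteq> ?I}"
  have fT: "finite T" unfolding T_def using finite_Iset by auto
  have ev: "{R. B2 ?I R} = {R. \<exists>t\<in>T. set (L2 t) \<subseteq> R}" unfolding B2_def T_def by blast
  have "measure_pmf.prob (rand_subset ?I q) {R. \<exists>t\<in>T. set (L2 t) \<subseteq> R} \<le> (\<Sum>t\<in>T. q ^ card (set (L2 t)))"
    by (rule union_bound[OF finite_Iset fT _ q]) (simp add: T_def)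
  hence "measure_pmf.prob (rand_subset ?I q) {R. B2 ?I R} \<le> (\<Sum>t\<in>T. q ^ card (set (L2 t)))"
    by (simp only: ev)
  also have "\<dots> = (\<Sum>t\<in>T. q ^ 8)"
  proof (intro sum.cong refl)
    fix t assume "t \<in> T"
    hence "distinct (L2 t)" by (simp add: T_def)
    moreover have "length (L2 t) = 8" by (cases t) (simp add: L2_def)
    ultimately show "q ^ card (set (L2 t)) = q ^ 8" by (simp add: distinct_card)
  qed
  also have "\<dots> = real (card T) * q ^ 8" by simp
  also have "\<dots> \<le> real (card (?I \<times> ?I \<times> ?I \<times> ?I \<times> ?I)) * q ^ 8"
  proof (rule mult_right_mono)
    have "card T \<le> card (?I \<times> ?I \<times> ?I \<times> ?I \<times> ?I)"
      by (rule card_mono) (auto simp: T_def finite_Iset)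
    thus "real (card T) \<le> real (card (?I \<times> ?I \<times> ?I \<times> ?I \<times> ?I))" by linarith
  qed (use q in simp)
  also have "\<dots> = real (card (Iset p)) ^ 5 * q ^ 8" by (simp add: card_cartesian_product eval_nat_numeral mult.assoc)
  finally show ?thesis .
qed




lemma card_tset_ge3: "w \<in> Qset p n \<Longrightarrow> card (tset w) \<ge> 3"
proof -
  assume w: "w \<in> Qset p n"
  obtain a b c d e where we: "w = (a,b,c,d,e)" by (cases w) auto
  have "card {a,b,c} = 3" using Q_props[of a b c d e p n] w we by auto
  moreover have "card {a,b,c} \<le> card {a,b,c,d,e}" by (rule card_mono) auto
  ultimately show ?thesis using we by simp
qed

lemma f_bound:
  assumes q: "0 \<le> q" "q \<le> 1"
  shows "(\<Sum>w\<in>Qset p n. q ^ card (tset w)) \<le>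
     2 * real (card (Iset p)) ^ 3 * q ^ 5 + 10 * real (card (Iset p)) ^ 2 * q ^ 4 + 8 * real (card (Iset p)) * q ^ 3"
proof -
  let ?Q = "Qset p n"
  have pw: "q ^ card (tset w) \<le> q ^ 5 + (if card (tset w) \<le> 4 then q ^ 4 else 0) + (if card (tset w) \<le> 3 then q ^ 3 else 0)"
    if "w \<in> ?Q" for w
  proof -
    have "3 \<le> card (tset w)" "card (tset w) \<le> 5" using card_tset_ge3[OF that] card_tset[of w] by auto
    hence "card (tset w) = 3 \<or> card (tset w) = 4 \<or> card (tset w) = 5" by auto
    thus ?thesis using q by (elim disjE) simp_all
  qed
  have "(\<Sum>w\<in>?Q. q ^ card (tset w)) \<le> (\<Sum>w\<in>?Q. q ^ 5 + (if card (tset w) \<le> 4 then q ^ 4 else 0) + (if card (tset w) \<le> 3 then q ^ 3 else 0))"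
    by (rule sum_mono) (rule pw)
  also have "\<dots> = real (card ?Q) * q ^ 5 + real (card {w\<in>?Q. card (tset w) \<le> 4}) * q ^ 4 + real (card {w\<in>?Q. card (tset w) \<le> 3}) * q ^ 3"
    by (simp add: sum.distrib sum.inter_filter[OF finite_Q, symmetric])
  also have "\<dots> \<le> real (2 * card (Iset p) ^ 3) * q ^ 5 + real (10 * card (Iset p) ^ 2) * q ^ 4 + real (8 * card (Iset p)) * q ^ 3"
    by (intro add_mono mult_right_mono of_nat_mono card_Q card_Q4 card_Q3 zero_le_power q(1))
  also have "\<dots> = 2 * real (card (Iset p)) ^ 3 * q ^ 5 + 10 * real (card (Iset p)) ^ 2 * q ^ 4 + 8 * real (card (Iset p)) * q ^ 3"
    by simp
  finally show ?thesis .
qed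

lemma sum4: "(\<Sum>z\<in>A\<times>A\<times>A\<times>A. case z of (a,b,c,d) \<Rightarrow> g a * g b * g c * (g d::real)) = (sum g A) ^ 4"
  by (simp add: sum.cartesian_product[symmetric] sum_product sum_distrib_left sum_distrib_right eval_nat_numeral ac_simps)

definition disj4 :: "(int\<times>int\<times>int\<times>int\<times>int) \<Rightarrow> (int\<times>int\<times>int\<times>int\<times>int) \<Rightarrow> (int\<times>int\<times>int\<times>int\<times>int) \<Rightarrow> (int\<times>int\<times>int\<times>int\<times>int) \<Rightarrow> bool" where
  "disj4 w1 w2 w3 w4 = (tset w1 \<inter> tset w2 = {} \<and> tset w1 \<inter> tset w3 = {} \<and> tset w1 \<inter> tset w4 = {}
     \<and> tset w2 \<inter> tset w3 = {} \<and> tset w2 \<inter> tset w4 = {} \<and> tset w3 \<inter> tset w4 = {})"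

lemma probB3:
  assumes q: "0 \<le> q" "q \<le> 1"
  shows "measure_pmf.prob (rand_subset (Iset p) q) {R. B3 p R} \<le>
     (3 * real p + 1) * (2 * real (card (Iset p)) ^ 3 * q ^ 5 + 10 * real (card (Iset p)) ^ 2 * q ^ 4 + 8 * real (card (Iset p)) * q ^ 3) ^ 4"
proof -
  let ?N = "{0..3 * int p}"
  let ?F = "2 * real (card (Iset p)) ^ 3 * q ^ 5 + 10 * real (card (Iset p)) ^ 2 * q ^ 4 + 8 * real (card (Iset p)) * q ^ 3"
  define g where "g = (\<lambda>w. q ^ card (tset w))"
  define Sg where "Sg = Sigma ?N (\<lambda>n. Qset p n \<times> Qset p n \<times> Qset p n \<times> Qset p n)"
  define T where "T = {t \<in> Sg. case t of (n,w1,w2,w3,w4) \<Rightarrow> disj4 w1 w2 w3 w4}"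
  define S where "S = (\<lambda>t::int\<times>(int\<times>int\<times>int\<times>int\<times>int)\<times>(int\<times>int\<times>int\<times>int\<times>int)\<times>(int\<times>int\<times>int\<times>int\<times>int)\<times>(int\<times>int\<times>int\<times>int\<times>int).
      case t of (n,w1,w2,w3,w4) \<Rightarrow> tset w1 \<union> tset w2 \<union> tset w3 \<union> tset w4)"
  define G where "G = (\<lambda>t::int\<times>(int\<times>int\<times>int\<times>int\<times>int)\<times>(int\<times>int\<times>int\<times>int\<times>int)\<times>(int\<times>int\<times>int\<times>int\<times>int)\<times>(int\<times>int\<times>int\<times>int\<times>int).
      case t of (n,w1,w2,w3,w4) \<Rightarrow> g w1 * g w2 * g w3 * g w4)"
  have fSg: "finite Sg" unfolding Sg_def by (intro finite_SigmaI finite_cartesian_product finite_Q) auto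
  have fT: "finite T" unfolding T_def using fSg by simp
  have ST: "S t \<subseteq> Iset p" if "t \<in> T" for t
    using that tset_Q unfolding T_def Sg_def S_def by (auto split: prod.splits)
  have ev: "{R. B3 p R} \<subseteq> {R. \<exists>t\<in>T. S t \<subseteq> R}"
  proof
    fix R assume "R \<in> {R. B3 p R}"
    then obtain n w1 w2 w3 w4 where h: "n \<in> ?N" "w1 \<in> Qset p n" "w2 \<in> Qset p n" "w3 \<in> Qset p n" "w4 \<in> Qset p n"
      "disj4 w1 w2 w3 w4" "tset w1 \<union> tset w2 \<union> tset w3 \<union> tset w4 \<subseteq> R"
      unfolding B3_def disj4_def by blast
    have "(n,w1,w2,w3,w4) \<in> T" using h unfolding T_def Sg_def by simp
    moreover have "S (n,w1,w2,w3,w4) \<subseteq> R" using h unfolding S_def by simp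
    ultimately show "R \<in> {R. \<exists>t\<in>T. S t \<subseteq> R}" by blast
  qed
  have "measure_pmf.prob (rand_subset (Iset p) q) {R. B3 p R} \<le> measure_pmf.prob (rand_subset (Iset p) q) {R. \<exists>t\<in>T. S t \<subseteq> R}"
    by (rule measure_pmf.finite_measure_mono[OF ev]) simp
  also have "\<dots> \<le> (\<Sum>t\<in>T. q ^ card (S t))"
    by (rule union_bound[OF finite_Iset fT ST q])
  also have "\<dots> = (\<Sum>t\<in>T. G t)"
  proof (intro sum.cong refl)
    fix t assume t: "t \<in> T"
    obtain n w1 w2 w3 w4 where te: "t = (n,w1,w2,w3,w4)" by (cases t) auto
    have d: "disj4 w1 w2 w3 w4" using t te unfolding T_def by simp
    have f: "finite (tset w)" for w by (simp add: tset_def)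
    have "card (S t) = card (tset w1) + card (tset w2) + card (tset w3) + card (tset w4)"
      using d f unfolding te S_def disj4_def
      by (simp add: card_Un_disjoint Int_Un_distrib Int_Un_distrib2 Int_commute)
    thus "q ^ card (S t) = G t" unfolding te G_def g_def by (simp add: power_add)
  qed
  also have "\<dots> \<le> (\<Sum>t\<in>Sg. G t)"
    by (rule sum_mono2[OF fSg]) (auto simp: T_def G_def g_def q split: prod.splits)
  also have "\<dots> = (\<Sum>n\<in>?N. (\<Sum>w\<in>Qset p n. g w) ^ 4)"
  proof -
    have "(\<Sum>t\<in>Sg. G t) = (\<Sum>n\<in>?N. \<Sum>z\<in>Qset p n \<times> Qset p n \<times> Qset p n \<times> Qset p n. G (n, z))"
    proof -
      have "(\<Sum>t\<in>Sg. G t) = (\<Sum>(n,z)\<in>Sg. G (n, z))" by simp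
      also have "\<dots> = (\<Sum>n\<in>?N. \<Sum>z\<in>Qset p n \<times> Qset p n \<times> Qset p n \<times> Qset p n. G (n, z))"
        unfolding Sg_def by (rule sum.Sigma[symmetric]) (auto intro!: finite_cartesian_product finite_Q)
      finally show ?thesis .
    qed
    also have "\<dots> = (\<Sum>n\<in>?N. (\<Sum>w\<in>Qset p n. g w) ^ 4)"
    proof (rule sum.cong[OF refl])
      fix n
      have "(\<Sum>z\<in>Qset p n \<times> Qset p n \<times> Qset p n \<times> Qset p n. G (n, z))
          = (\<Sum>z\<in>Qset p n \<times> Qset p n \<times> Qset p n \<times> Qset p n. case z of (a,b,c,d) \<Rightarrow> g a * g b * g c * g d)"
        by (intro sum.cong refl) (auto simp: G_def split: prod.splits)
      also have "\<dots> = (\<Sum>w\<in>Qset p n. g w) ^ 4" by (rule sum4)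
      finally show "(\<Sum>z\<in>Qset p n \<times> Qset p n \<times> Qset p n \<times> Qset p n. G (n, z)) = (\<Sum>w\<in>Qset p n. g w) ^ 4" .
    qed
    finally show ?thesis .
  qed
  also have "\<dots> \<le> (\<Sum>n\<in>?N. ?F ^ 4)"
  proof (rule sum_mono)
    fix n
    have "0 \<le> (\<Sum>w\<in>Qset p n. g w)" unfolding g_def using q by (intro sum_nonneg) simp
    moreover have "(\<Sum>w\<in>Qset p n. g w) \<le> ?F" unfolding g_def by (rule f_bound[OF q])
    ultimately show "(\<Sum>w\<in>Qset p n. g w) ^ 4 \<le> ?F ^ 4" using power_mono by blast
  qed
  also have "\<dots> = (3 * real p + 1) * ?F ^ 4"
  proof -
    have "card ?N = 3 * p + 1" by simp
    thus ?thesis by simp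
  qed
  finally show ?thesis .
qed




lemma alg:
  fixes t K N q :: real
  assumes t: "t \<ge> 1" and K: "K \<ge> 1" and N: "0 \<le> N" "N \<le> t^3" and big: "640002 * K^21 \<le> t"
    and q: "q = K / t^2"
  shows "2 * (N^5 * q^8) + (3*t^3+1) * (2*N^3*q^5 + 10*N^2*q^4 + 8*N*q^3)^4 \<le> 1 / K"
proof -
  have q0: "q \<ge> 0" using q K t by simp
  have tp: "t > 0" using t by simp
  have a1: "N^5 * q^8 \<le> K^8 / t"
  proof -
    have "N^5 * q^8 \<le> (t^3)^5 * q^8" using N q0 by (intro mult_right_mono power_mono) auto
    also have "\<dots> = K^8 / t" using tp unfolding q by (simp add: field_simps power_mult_distrib flip: power_mult power_add) (simp flip: power_Suc)?
    finally show ?thesis .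
  qed
  have b1: "N^3 * q^5 \<le> K^5 / t"
  proof -
    have "N^3 * q^5 \<le> (t^3)^3 * q^5" using N q0 by (intro mult_right_mono power_mono) auto
    also have "\<dots> = K^5 / t" using tp unfolding q by (simp add: field_simps power_mult_distrib flip: power_mult power_add) (simp flip: power_Suc)?
    finally show ?thesis .
  qed
  have b2: "N^2 * q^4 \<le> K^5 / t"
  proof -
    have "N^2 * q^4 \<le> (t^3)^2 * q^4" using N q0 by (intro mult_right_mono power_mono) auto
    also have "\<dots> = K^4 / t / t" using tp unfolding q by (simp add: field_simps power_mult_distrib flip: power_mult power_add) (simp flip: power_Suc)?
    also have "\<dots> \<le> K^4 / t" using t K by (simp add: divide_le_eq_1 field_simps) 
    also have "\<dots> \<le> K^5 / t" using t K tp by (intro divide_right_mono) (auto intro: power_increasing)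
    finally show ?thesis .
  qed
  have b3: "N * q^3 \<le> K^5 / t"
  proof -
    have "N * q^3 \<le> t^3 * q^3" using N q0 by (intro mult_right_mono) auto
    also have "\<dots> = K^3 / t / t / t" using tp unfolding q by (simp add: field_simps power_mult_distrib flip: power_mult power_add) (simp flip: power_Suc)?
    also have "\<dots> \<le> K^3 / t" using t K by (simp add: field_simps) (metis mult_mono' order_trans mult_1_left zero_le_one) 
    also have "\<dots> \<le> K^5 / t" using t K tp by (intro divide_right_mono) (auto intro: power_increasing)
    finally show ?thesis .
  qed
  define F where "F = 2*N^3*q^5 + 10*N^2*q^4 + 8*N*q^3"
  have F0: "F \<ge> 0" unfolding F_def using N q0 by simp
  have F1: "F \<le> 20 * (K^5 / t)" unfolding F_def using b1 b2 b3 by simp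
  have F4: "F^4 \<le> (20 * (K^5 / t))^4" by (rule power_mono[OF F1 F0])
  have "(3*t^3+1) * F^4 \<le> (4 * t^3) * (20 * (K^5 / t))^4"
    using F4 F0 t by (intro mult_mono) (auto simp: one_le_power)
  also have "\<dots> = (4 * t^3) * (160000 * (K^20 / t^4))"
    by (simp add: power_mult_distrib power_divide flip: power_mult)
  also have "\<dots> = 640000 * K^20 / t" using tp by (simp add: field_simps) (simp flip: power_Suc)?
  finally have c1: "(3*t^3+1) * F^4 \<le> 640000 * K^20 / t" .
  have c2: "2 * (N^5 * q^8) \<le> 2 * K^20 / t"
  proof -
    have "K^8 \<le> K^20" using K by (intro power_increasing) auto
    hence "K^8 / t \<le> K^20 / t" using tp by (intro divide_right_mono) auto
    thus ?thesis using a1 by linarith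
  qed
  have sm: "640000 * K^20 / t + 2 * K^20 / t = 640002 * K^20 / t" by (simp add: add_divide_distrib[symmetric])
  have "2 * (N^5 * q^8) + (3*t^3+1) * F^4 \<le> 640002 * K^20 / t" using c1 c2 sm by linarith
  also have "\<dots> \<le> 1 / K"
  proof -
    have "K * (K^20 * 640002) = 640002 * K^21" by (simp flip: power_Suc)
    thus ?thesis using big K tp by (simp add: field_simps)
  qed
  finally show ?thesis unfolding F_def .
qed

lemma card_Iset_le: "real (card (Iset p)) \<le> real p"
proof -
  have "card (Iset p) = nat (int (p div 2) - 1)" by (simp add: Iset_def)
  also have "\<dots> \<le> p" by linarith
  finally show ?thesis by simp
qed

lemma asym: "eventually (\<lambda>x::real. 38221 \<le> ln x \<and> 2000000000000 * ln x ^ 21 \<le> x powr (1/3)) at_top"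
proof (rule eventually_conj)
  show "eventually (\<lambda>x::real. 38221 \<le> ln x) at_top" by real_asymp
  show "eventually (\<lambda>x::real. 2000000000000 * ln x ^ 21 \<le> x powr (1/3)) at_top" by real_asymp
qed

theorem mainTheorem10:
  shows "\<exists>C::real. \<exists>P0::nat. \<forall>p::nat. prime p \<and> p \<ge> P0 \<longrightarrow>
    measure_pmf.prob (rand_subset (Iset p) (real (Kp p) * real p powr (-2/3)))
      {R. \<exists>n::int. real p / 5 \<le> real_of_int n \<and> real_of_int n \<le> 7 * real p / 5 \<and>
            card (Qset p n \<inter> pow5 R) \<ge> Kp p}
    \<le> C / real (Kp p)"
proof -
  obtain x0 :: real where x0: "\<And>x. x \<ge> x0 \<Longrightarrow> 38221 \<le> ln x \<and> 2000000000000 * ln x ^ 21 \<le> x powr (1/3)"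
    using asym unfolding eventually_at_top_linorder by blast
  show ?thesis
  proof (rule exI[of _ 1], rule exI[of _ "nat \<lceil>x0\<rceil>"], intro allI impI)
    fix p :: nat assume pp: "prime p \<and> nat \<lceil>x0\<rceil> \<le> p"
    have "x0 \<le> real p" using pp by linarith
    hence L: "38221 \<le> ln (real p)" and Bg: "2000000000000 * ln (real p) ^ 21 \<le> real p powr (1/3)"
      using x0 by auto
    have p0: "real p > 0"
    proof (rule ccontr)
      assume "\<not> real p > 0" hence "p = 0" by simp
      thus False using L by simp
    qed
    have p1: "real p \<ge> 1" using p0 by simp
    define K where "K = Kp p"
    define t where "t = real p powr (1/3)"
    define q where "q = real K * real p powr (-2/3)"
    define N where "N = real (card (Iset p))"
    have lnp0: "ln (real p) \<ge> 0" using L by simp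
    have Kr: "real K = of_int \<lceil>ln (real p)\<rceil>" unfolding K_def Kp_def using lnp0 by simp
    have K1: "real K \<ge> 38221" using Kr L by linarith
    have K2: "real K \<le> 2 * ln (real p)" using Kr L by linarith
    have tpos: "t > 0" using p0 unfolding t_def by simp
    have "t^3 = t powr (real 3)" by (rule powr_realpow[OF tpos, symmetric])
    also have "\<dots> = real p" unfolding t_def using p0 by (simp add: powr_powr)
    finally have t3: "t^3 = real p" .
    have "t^2 = t powr (real 2)" by (rule powr_realpow[OF tpos, symmetric])
    also have "\<dots> = real p powr (2/3)" unfolding t_def by (simp add: powr_powr)
    finally have e: "t^2 = real p powr (2/3)" .
    have m: "(-2/3::real) = - (2/3)" by simp
    have "real p powr (-2/3) = inverse (real p powr (2/3))" unfolding m by (rule powr_minus)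
    also have "\<dots> = 1 / t^2" unfolding e by (rule inverse_eq_divide)
    finally have e2: "real p powr (-2/3) = 1 / t^2" .
    have qt: "q = real K / t^2" unfolding q_def e2 by simp
    have t1: "t \<ge> 1" unfolding t_def using p1 by (rule ge_one_powr_ge_zero) simp
    have big: "640002 * real K ^ 21 \<le> t"
    proof -
      have "real K ^ 21 \<le> (2 * ln (real p)) ^ 21" using K1 K2 by (intro power_mono) auto
      also have "\<dots> = 2097152 * ln (real p) ^ 21" by (simp add: power_mult_distrib)
      finally have "640002 * real K ^ 21 \<le> 640002 * (2097152 * ln (real p) ^ 21)" by simp
      also have "\<dots> \<le> 2000000000000 * ln (real p) ^ 21" using lnp0 by simp
      also have "\<dots> \<le> t" using Bg unfolding t_def .
      finally show ?thesis .
    qed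
    have Kpos: "real K \<ge> 1" using K1 by simp
    have q0: "0 \<le> q" unfolding qt by simp
    have q1: "q \<le> 1"
    proof -
      have "real K \<le> real K ^ 21" using Kpos by (metis power_one_right power_increasing one_le_numeral zero_less_numeral Suc_le_eq  le_numeral_extra(4) numeral_One)
      hence "real K \<le> t" using big Kpos by linarith
      also have "t \<le> t^2" using t1 by (simp add: power2_eq_square)
      finally show ?thesis unfolding qt using t1 by simp
    qed
    have N0: "0 \<le> N" "N \<le> t^3" unfolding N_def t3 using card_Iset_le by auto
    let ?M = "rand_subset (Iset p) q"
    let ?E = "{R. \<exists>n::int. real p / 5 \<le> real_of_int n \<and> real_of_int n \<le> 7 * real p / 5 \<and>
            card (Qset p n \<inter> pow5 R) \<ge> K}"
    have sub: "?E \<inter> set_pmf ?M \<subseteq> {R. B1 (Iset p) R} \<union> {R. B2 (Iset p) R} \<union> {R. B3 p R}"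
    proof
      fix R assume R: "R \<in> ?E \<inter> set_pmf ?M"
      have RI: "R \<subseteq> Iset p" using R set_rand_subset[OF finite_Iset] by blast
      have fR: "finite R" using RI finite_Iset finite_subset by blast
      obtain n where n: "card (Qset p n \<inter> pow5 R) \<ge> K" using R by blast
      show "R \<in> {R. B1 (Iset p) R} \<union> {R. B2 (Iset p) R} \<union> {R. B3 p R}"
      proof (rule ccontr)
        assume "\<not> ?thesis"
        hence "card (Qset p n \<inter> pow5 R) \<le> 38220" using det_main[OF _ _ _ RI fR] by blast
        moreover have "K \<ge> 38221" using K1 by linarith
        ultimately show False using n by linarith
      qed
    qed
    have "measure_pmf.prob ?M ?E = measure_pmf.prob ?M (?E \<inter> set_pmf ?M)"
      by (simp add: measure_Int_set_pmf)
    also have "\<dots> \<le> measure_pmf.prob ?M ({R. B1 (Iset p) R} \<union> {R. B2 (Iset p) R} \<union> {R. B3 p R})"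
      by (rule measure_pmf.finite_measure_mono[OF sub]) simp
    also have "\<dots> \<le> measure_pmf.prob ?M {R. B1 (Iset p) R} + measure_pmf.prob ?M {R. B2 (Iset p) R} + measure_pmf.prob ?M {R. B3 p R}"
    proof -
      have "measure_pmf.prob ?M ({R. B1 (Iset p) R} \<union> {R. B2 (Iset p) R} \<union> {R. B3 p R})
          \<le> measure_pmf.prob ?M ({R. B1 (Iset p) R} \<union> {R. B2 (Iset p) R}) + measure_pmf.prob ?M {R. B3 p R}"
        by (rule measure_Un_le) simp_all
      moreover have "measure_pmf.prob ?M ({R. B1 (Iset p) R} \<union> {R. B2 (Iset p) R})
          \<le> measure_pmf.prob ?M {R. B1 (Iset p) R} + measure_pmf.prob ?M {R. B2 (Iset p) R}"
        by (rule measure_Un_le) simp_all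
      ultimately show ?thesis by linarith
    qed
    also have "\<dots> \<le> N^5 * q^8 + N^5 * q^8 + (3 * real p + 1) * (2 * N ^ 3 * q ^ 5 + 10 * N ^ 2 * q ^ 4 + 8 * N * q ^ 3) ^ 4"
      unfolding N_def by (intro add_mono probB1 probB2 probB3 q0 q1)
    also have "\<dots> = 2 * (N^5 * q^8) + (3*t^3+1) * (2*N^3*q^5 + 10*N^2*q^4 + 8*N*q^3)^4"
      by (simp add: t3)
    also have "\<dots> \<le> 1 / real K"
      by (rule alg[OF t1 Kpos N0 big qt])
    finally have X: "measure_pmf.prob ?M ?E \<le> 1 / real K" by linarith
    show "measure_pmf.prob (rand_subset (Iset p) (real (Kp p) * real p powr (-2/3)))
      {R. \<exists>n::int. real p / 5 \<le> real_of_int n \<and> real_of_int n \<le> 7 * real p / 5 \<and>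
            card (Qset p n \<inter> pow5 R) \<ge> Kp p} \<le> 1 / real (Kp p)"
      using X by (simp add: q_def K_def)
  qed
qed

end
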